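(* Let $s\ge1$ and $k\ge1$ be fixed integers. (a) Let $P_n\ge s$ be positive integers and $t_n\in[0,1]$ with $\frac{1}{s!}t_n^{2s}P_n^{s}=\frac{\ln n+(k-1)\ln\ln n+\beta_n}{n}$ and $\lim_{n\to\infty}\beta_n=-\infty$. Then there exist $\widetilde{t_n},\widetilde{P_n}$ with $\frac{1}{s!}\widetilde{t_n}^{2s}\widetilde{P_n}^{s}=\frac{\ln n+(k-1)\ln\ln n+\widetilde{\beta_n}}{n}$, $\lim_{n\to\infty}\widetilde{\beta_n}=-\infty$ and $\widetilde{\beta_n}=-O(\ln\ln n)$, such that there is a coupling under which $H_s(n,t_n,P_n)$ is a spanning subgraph of $H_s(n,\widetilde{t_n},\widetilde{P_n})$. (b) Let $P_n\ge s$ be positive integers and $t_n\in[0,1]$ with $\frac{1}{s!}t_n^{2s}P_n^{s}=\frac{\ln n+(k-1)\ln\ln n+\beta_n}{n}$ and $\lim_{n\to\infty}\beta_n=\infty$. Then there exist $\widehat{t_n},\widehat{P_n}$ with $\frac{1}{s!}\widehat{t_n}^{2s}\widehat{P_n}^{s}=\frac{\ln n+(k-1)\ln\ln n+\widehat{\beta_n}}{n}$, $\lim_{n\to\infty}\widehat{\beta_n}=\infty$ and $\widehat{\beta_n}=O(\ln\ln n)$, such that there is a coupling under which $H_s(n,t_n,P_n)$ is a spanning supergraph of $H_s(n,\widehat{t_n},\widehat{P_n})$.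
   Context: The binomial random $s$-intersection graph $H_s(n,t_n,P_n)$ has $n$ vertices and a pool of $P_n$ distinct items; each item is assigned to each vertex independently with probability $t_n$, and two vertices are adjacent iff they share at least $s$ items. A coupling of two random graphs $G_1,G_2$ on the same vertex set is a probability space carrying random graphs $G_1',G_2'$ with the distributions of $G_1,G_2$ respectively; "$G_1$ is a spanning subgraph (resp. supergraph) of $G_2$ under the coupling" means $G_1'$ is a spanning subgraph (resp. supergraph) of $G_2'$ almost surely. *)

theory Defs
  imports "HOL-Probability.Probability" "HOL-Library.Landau_Symbols"
begin

text \<open>Vertices are 0..n-1, items are 0..P-1.  A random assignment
  X (v,i) = True means item i is assigned to vertex v; all n*P indicators are
  independent Bernoulli(t).\<close>
definition item_assignment :: "nat \<Rightarrow> nat \<Rightarrow> real \<Rightarrow> (nat \<times> nat \<Rightarrow> bool) pmf" where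
  "item_assignment n P t = Pi_pmf ({..<n} \<times> {..<P}) False (\<lambda>_. bernoulli_pmf t)"

definition items_of :: "(nat \<times> nat \<Rightarrow> bool) \<Rightarrow> nat \<Rightarrow> nat \<Rightarrow> nat set" where
  "items_of X P v = {i. i < P \<and> X (v, i)}"

definition s_intersection_graph :: "nat \<Rightarrow> nat \<Rightarrow> nat \<Rightarrow> (nat \<times> nat \<Rightarrow> bool) \<Rightarrow> (nat \<times> nat) set" where
  "s_intersection_graph s n P X =
     {(u, v). u < n \<and> v < n \<and> u \<noteq> v \<and> s \<le> card (items_of X P u \<inter> items_of X P v)}"

definition binomial_s_intersection_graph :: "nat \<Rightarrow> nat \<Rightarrow> real \<Rightarrow> nat \<Rightarrow> (nat \<times> nat) set pmf" where
  "binomial_s_intersection_graph s n t P = map_pmf (s_intersection_graph s n P) (item_assignment n P t)"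

definition coupling_spanning_subgraph :: "(nat \<times> nat) set pmf \<Rightarrow> (nat \<times> nat) set pmf \<Rightarrow> bool" where
  "coupling_spanning_subgraph G1 G2 \<longleftrightarrow>
     (\<exists>\<mu> :: ((nat \<times> nat) set \<times> (nat \<times> nat) set) pmf.
        map_pmf fst \<mu> = G1 \<and> map_pmf snd \<mu> = G2 \<and> (\<forall>p \<in> set_pmf \<mu>. fst p \<subseteq> snd p))"

end

theory Submission
  imports Defs
begin


definition cpl :: "real \<Rightarrow> real \<Rightarrow> (bool \<times> bool) pmf" where
 "cpl t t' = bernoulli_pmf t' \<bind> (\<lambda>b. if b then map_pmf (\<lambda>a. (a, True)) (bernoulli_pmf (t/t')) else return_pmf (False, False))"

lemma cpl_fst: assumes "0 \<le> t" "t \<le> t'" "t' \<le> 1"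
  shows "map_pmf fst (cpl t t') = bernoulli_pmf t"
proof (rule pmf_eqI)
  fix x :: bool
  have q: "0 \<le> t/t'" "t/t' \<le> 1" using assms by (auto simp: divide_simps)
  have m: "map_pmf fst (cpl t t') = bernoulli_pmf t' \<bind> (\<lambda>b. if b then bernoulli_pmf (t/t') else return_pmf False)"
    unfolding cpl_def map_bind_pmf by (intro bind_pmf_cong) (auto simp: pmf.map_comp o_def)
  show "pmf (map_pmf fst (cpl t t')) x = pmf (bernoulli_pmf t) x"
    unfolding m pmf_bind using assms q
    by (cases x) (auto simp: pmf_return field_simps)
qed

lemma cpl_snd: assumes "0 \<le> t" "t \<le> t'" "t' \<le> 1"
  shows "map_pmf snd (cpl t t') = bernoulli_pmf t'"
proof -
  have "map_pmf snd (cpl t t') = bernoulli_pmf t' \<bind> (\<lambda>b. return_pmf b)"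
    unfolding cpl_def map_bind_pmf by (intro bind_pmf_cong) (auto simp: pmf.map_comp o_def)
  thus ?thesis by (simp add: bind_return_pmf')
qed

lemma cpl_set: "p \<in> set_pmf (cpl t t') \<Longrightarrow> fst p \<longrightarrow> snd p"
  unfolding cpl_def by (auto split: if_splits)

lemma coupling_t:
  assumes "0 \<le> t" "t \<le> t'" "t' \<le> 1"
  shows "coupling_spanning_subgraph (binomial_s_intersection_graph s n t P) (binomial_s_intersection_graph s n t' P)"
proof -
  let ?D = "{..<n} \<times> {..<P}"
  let ?Q = "Pi_pmf ?D (False, False) (\<lambda>_. cpl t t')"
  define \<mu> where "\<mu> = map_pmf (\<lambda>f. (s_intersection_graph s n P (fst \<circ> f), s_intersection_graph s n P (snd \<circ> f))) ?Q"
  have fin: "finite ?D" by auto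
  have 1: "map_pmf (\<lambda>f. fst \<circ> f) ?Q = item_assignment n P t"
    unfolding item_assignment_def
    using Pi_pmf_map[OF fin, of fst "(False,False)" False "\<lambda>_. cpl t t'"] cpl_fst[OF assms] by simp
  have 2: "map_pmf (\<lambda>f. snd \<circ> f) ?Q = item_assignment n P t'"
    unfolding item_assignment_def
    using Pi_pmf_map[OF fin, of snd "(False,False)" False "\<lambda>_. cpl t t'"] cpl_snd[OF assms] by simp
  have "map_pmf fst \<mu> = binomial_s_intersection_graph s n t P"
    unfolding \<mu>_def binomial_s_intersection_graph_def 1[symmetric] pmf.map_comp by (simp add: o_def)
  moreover have "map_pmf snd \<mu> = binomial_s_intersection_graph s n t' P"
    unfolding \<mu>_def binomial_s_intersection_graph_def 2[symmetric] pmf.map_comp by (simp add: o_def)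
  moreover have "\<forall>p \<in> set_pmf \<mu>. fst p \<subseteq> snd p"
  proof
    fix p assume "p \<in> set_pmf \<mu>"
    then obtain f where f: "f \<in> set_pmf ?Q" and p: "p = (s_intersection_graph s n P (fst \<circ> f), s_intersection_graph s n P (snd \<circ> f))"
      unfolding \<mu>_def by auto
    have mono: "fst (f x) \<longrightarrow> snd (f x)" for x
    proof (cases "x \<in> ?D")
      case True
      then have "f x \<in> set_pmf (cpl t t')" using f by (auto simp: set_Pi_pmf PiE_dflt_def)
      then show ?thesis by (rule cpl_set)
    next
      case False
      then have "f x = (False, False)" using f set_Pi_pmf_subset[OF fin, of "(False,False)" "\<lambda>_. cpl t t'"] by blast
      then show ?thesis by simp
    qed
    have sub: "items_of (fst \<circ> f) P v \<subseteq> items_of (snd \<circ> f) P v" for v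
      using mono unfolding items_of_def by auto
    have "card (items_of (fst \<circ> f) P u \<inter> items_of (fst \<circ> f) P v) \<le> card (items_of (snd \<circ> f) P u \<inter> items_of (snd \<circ> f) P v)" for u v
      by (rule card_mono) (use sub in \<open>auto simp: items_of_def\<close>)
    then show "fst p \<subseteq> snd p" unfolding p s_intersection_graph_def
      using le_trans by fastforce
  qed
  ultimately show ?thesis unfolding coupling_spanning_subgraph_def by blast
qed



lemma max_pow: fixes t r A :: real assumes "0 \<le> t" "0 \<le> r" "0 \<le> A"
  shows "(max t r)^m * A = max (t^m * A) (r^m * A)"
proof (cases "t \<le> r")
  case True
  then have "t^m * A \<le> r^m * A" using assms by (intro mult_right_mono power_mono) auto
  then show ?thesis using True by (simp add: max_def)
next
  case False
  then have "r^m * A \<le> t^m * A" using assms by (intro mult_right_mono power_mono) auto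
  then show ?thesis using False by (simp add: max_def)
qed

lemma min_pow: fixes t r A :: real assumes "0 \<le> t" "0 \<le> r" "0 \<le> A"
  shows "(min t r)^m * A = min (t^m * A) (r^m * A)"
proof (cases "t \<le> r")
  case True
  then have "t^m * A \<le> r^m * A" using assms by (intro mult_right_mono power_mono) auto
  then show ?thesis using True by (simp add: min_def)
next
  case False
  then have "r^m * A \<le> t^m * A" using assms by (intro mult_right_mono power_mono) auto
  then show ?thesis using False by (simp add: min_def)
qed

lemma root_pow: assumes "0 \<le> y" "s \<ge> 1" shows "root (2 * s) y ^ (2 * s) = y"
  using assms by (simp add: real_root_pow_pos2)

lemma fact_le_P: assumes "s \<le> P" shows "(fact s :: real) \<le> real P ^ s"
proof -
  have "(fact s :: real) \<le> real (s^s)" by (rule fact_le_power)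
  also have "\<dots> \<le> real P ^ s" using assms by (simp add: power_mono)
  finally show ?thesis .
qed


lemma lnln_top: "filterlim (\<lambda>n. ln (ln (real n))) at_top at_top"
  using filterlim_compose[OF ln_at_top filterlim_compose[OF ln_at_top filterlim_real_sequentially]]
  by (simp add: o_def)

lemma y_zero: "((\<lambda>n. (ln (real n) + c * ln (ln (real n))) / real n) \<longlongrightarrow> 0) at_top"
proof (rule tendsto_sandwich[where f="\<lambda>n. - ((1 + \<bar>c\<bar>) * (ln (real n) / real n))"
                              and h="\<lambda>n. (1 + \<bar>c\<bar>) * (ln (real n) / real n)"])
  have ev: "eventually (\<lambda>n. (3::nat) \<le> n) at_top" by (rule eventually_ge_at_top)
  have b: "\<bar>ln (real n) + c * ln (ln (real n))\<bar> \<le> (1 + \<bar>c\<bar>) * ln (real n)" if "3 \<le> n" for n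
  proof -
    have l1: "1 \<le> ln (real n)"
    proof -
      have "exp 1 \<le> (3::real)" using exp_le by simp
      also have "\<dots> \<le> real n" using that by simp
      finally show ?thesis using ln_le_cancel_iff[of "exp 1" "real n"] that by simp
    qed
    have l2: "ln (ln (real n)) \<le> ln (real n)" using ln_le_minus_one[of "ln (real n)"] l1 by linarith
    have l3: "0 \<le> ln (ln (real n))" using l1 by simp
    have "\<bar>c * ln (ln (real n))\<bar> \<le> \<bar>c\<bar> * ln (real n)"
      using l2 l3 by (simp add: abs_mult mult_left_mono)
    then show ?thesis using l1 by (simp add: algebra_simps)
  qed
  show "eventually (\<lambda>n. - ((1 + \<bar>c\<bar>) * (ln (real n) / real n)) \<le> (ln (real n) + c * ln (ln (real n))) / real n) at_top"
    using ev
  proof eventually_elim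
    case (elim n)
    have "- ((1 + \<bar>c\<bar>) * ln (real n)) \<le> ln (real n) + c * ln (ln (real n))" using b[OF elim] by linarith
    then have "- ((1 + \<bar>c\<bar>) * ln (real n)) / real n \<le> (ln (real n) + c * ln (ln (real n))) / real n"
      by (rule divide_right_mono) simp
    then show ?case by simp
  qed
  show "eventually (\<lambda>n. (ln (real n) + c * ln (ln (real n))) / real n \<le> (1 + \<bar>c\<bar>) * (ln (real n) / real n)) at_top"
    using ev
  proof eventually_elim
    case (elim n)
    have "ln (real n) + c * ln (ln (real n)) \<le> (1 + \<bar>c\<bar>) * ln (real n)" using b[OF elim] by linarith
    then have "(ln (real n) + c * ln (ln (real n))) / real n \<le> (1 + \<bar>c\<bar>) * ln (real n) / real n"
      by (rule divide_right_mono) simp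
    then show ?case by simp
  qed
  show "((\<lambda>n. (1 + \<bar>c\<bar>) * (ln (real n) / real n)) \<longlongrightarrow> 0) at_top"
    using tendsto_mult_right_zero[OF lim_ln_over_n] by simp
  show "((\<lambda>n. - ((1 + \<bar>c\<bar>) * (ln (real n) / real n))) \<longlongrightarrow> 0) at_top"
    using tendsto_minus[OF tendsto_mult_right_zero[OF lim_ln_over_n]] by simp
qed


lemma part_a:
  fixes s k :: nat and t :: "nat \<Rightarrow> real" and P :: "nat \<Rightarrow> nat" and \<beta> :: "nat \<Rightarrow> real"
  assumes s: "s \<ge> 1" and k: "k \<ge> 1"
  and hP: "\<forall>n. s \<le> P n \<and> 0 \<le> t n \<and> t n \<le> 1"
  and heq: "\<forall>n\<ge>2. t n ^ (2 * s) * real (P n) ^ s / fact s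
               = (ln (real n) + (real k - 1) * ln (ln (real n)) + \<beta> n) / real n"
  and hb: "filterlim \<beta> at_bot at_top"
  shows "\<exists>(t' :: nat \<Rightarrow> real) (P' :: nat \<Rightarrow> nat) (\<beta>' :: nat \<Rightarrow> real).
         (\<forall>n. s \<le> P' n \<and> 0 \<le> t' n \<and> t' n \<le> 1) \<and>
         (\<forall>n\<ge>2. t' n ^ (2 * s) * real (P' n) ^ s / fact s
                  = (ln (real n) + (real k - 1) * ln (ln (real n)) + \<beta>' n) / real n) \<and>
         filterlim \<beta>' at_bot at_top \<and>
         (\<lambda>n. - \<beta>' n) \<in> O(\<lambda>n. ln (ln (real n))) \<and>
         (\<forall>n. coupling_spanning_subgraph
                (binomial_s_intersection_graph s n (t n) (P n))
                (binomial_s_intersection_graph s n (t' n) (P' n)))"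
proof -
  define L where "L n = ln (real n) + (real k - 1) * ln (ln (real n))" for n
  define A where "A n = real (P n) ^ s / fact s" for n
  define y where "y n = (L n - ln (ln (real n))) / real n" for n
  define r where "r n = root (2 * s) (y n / A n)" for n
  define t' where "t' n = max (t n) (min 1 (r n))" for n
  define \<beta>' where "\<beta>' n = real n * (t' n ^ (2 * s) * A n) - L n" for n
  have Apos: "A n > 0" for n
  proof -
    have "P n > 0" using hP s by (metis le_trans not_less not_one_le_zero)
    then show ?thesis by (simp add: A_def)
  qed
  have A1: "A n \<ge> 1" for n using fact_le_P[of s "P n"] hP by (auto simp: A_def)
  have t'b: "\<forall>n. s \<le> P n \<and> 0 \<le> t' n \<and> t' n \<le> 1" using hP by (auto simp: t'_def le_max_iff_disj)
  have eq: "\<forall>n\<ge>2. t' n ^ (2 * s) * real (P n) ^ s / fact s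
                  = (ln (real n) + (real k - 1) * ln (ln (real n)) + \<beta>' n) / real n"
    by (auto simp: \<beta>'_def L_def A_def)
  have ev1: "eventually (\<lambda>n. y n \<le> 1) at_top"
  proof -
    have "((\<lambda>n. (ln (real n) + (real k - 2) * ln (ln (real n))) / real n) \<longlongrightarrow> 0) at_top"
      by (rule y_zero)
    moreover have "(\<lambda>n. (ln (real n) + (real k - 2) * ln (ln (real n))) / real n) = y"
      by (auto simp: y_def L_def fun_eq_iff algebra_simps)
    ultimately have "(y \<longlongrightarrow> 0) at_top" by simp
    then have "eventually (\<lambda>n. y n < 1) at_top" by (rule order_tendstoD) simp
    then show ?thesis by eventually_elim simp
  qed
  have ev2: "eventually (\<lambda>n. 0 \<le> ln (ln (real n))) at_top"
    using lnln_top by (simp add: filterlim_at_top)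
  have ev3: "eventually (\<lambda>n. (3::nat) \<le> n) at_top" by (rule eventually_ge_at_top)
  have evb: "eventually (\<lambda>n. \<beta>' n = max (\<beta> n) (- ln (ln (real n)))) at_top"
    using ev1 ev2 ev3
  proof eventually_elim
    case (elim n)
    have ln1: "ln (real n) \<ge> 1"
    proof -
      have "exp 1 \<le> (3::real)" using exp_le by simp
      also have "\<dots> \<le> real n" using elim by simp
      finally show ?thesis using ln_le_cancel_iff[of "exp 1" "real n"] elim by simp
    qed
    have "ln (ln (real n)) \<le> ln (real n)" using ln_le_minus_one[of "ln (real n)"] ln1 by linarith
    moreover have "0 \<le> (real k - 1) * ln (ln (real n))" using k elim by simp
    ultimately have y0: "0 \<le> y n" unfolding y_def L_def by (intro divide_nonneg_nonneg) auto
    have r0: "0 \<le> r n" using y0 Apos[of n] unfolding r_def by (intro real_root_ge_zero) auto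
    have rp: "r n ^ (2 * s) * A n = y n"
      using root_pow[of "y n / A n" s] y0 Apos[of n] s by (simp add: r_def)
    have "r n ^ (2 * s) * 1 \<le> r n ^ (2 * s) * A n"
      using A1[of n] r0 by (intro mult_left_mono) auto
    then have "r n ^ (2 * s) \<le> 1" using rp elim(1) by simp
    then have "r n \<le> 1" using r0 s power_le_one_iff[of "r n" "2 * s"] by auto
    then have tt: "t' n = max (t n) (r n)" by (simp add: t'_def)
    have xt: "real n * (t n ^ (2 * s) * A n) = L n + \<beta> n"
      using heq elim by (auto simp: A_def L_def)
    have "\<beta>' n = real n * max (t n ^ (2 * s) * A n) (y n) - L n"
      unfolding \<beta>'_def tt using max_pow[of "t n" "r n" "A n" "2 * s"] hP r0 Apos[of n] rp by simp
    also have "\<dots> = max (real n * (t n ^ (2 * s) * A n)) (real n * y n) - L n"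
      by (simp add: max_mult_distrib_left)
    also have "real n * y n = L n - ln (ln (real n))" using elim by (simp add: y_def)
    finally show ?case using xt by (simp add: max_diff_distrib_left)
  qed
  have "filterlim \<beta>' at_bot at_top"
    unfolding filterlim_at_bot
  proof
    fix Z :: real
    have "eventually (\<lambda>n. \<beta> n \<le> Z) at_top" using hb by (simp add: filterlim_at_bot)
    moreover have "eventually (\<lambda>n. - Z \<le> ln (ln (real n))) at_top" using lnln_top by (simp add: filterlim_at_top)
    ultimately show "eventually (\<lambda>n. \<beta>' n \<le> Z) at_top" using evb by eventually_elim auto
  qed
  moreover have "(\<lambda>n. - \<beta>' n) \<in> O(\<lambda>n. ln (ln (real n)))"
  proof (rule bigoI[where c=1])
    have "eventually (\<lambda>n. \<beta> n \<le> 0) at_top" using hb by (simp add: filterlim_at_bot)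
    then show "eventually (\<lambda>n. norm (- \<beta>' n) \<le> 1 * norm (ln (ln (real n)))) at_top"
      using evb ev2 by eventually_elim auto
  qed
  moreover have "\<forall>n. coupling_spanning_subgraph
                (binomial_s_intersection_graph s n (t n) (P n))
                (binomial_s_intersection_graph s n (t' n) (P n))"
    using hP by (auto intro!: coupling_t simp: t'_def)
  ultimately show ?thesis using t'b eq by (intro exI[of _ t'] exI[of _ P] exI[of _ \<beta>']) blast
qed


lemma part_b:
  fixes s k :: nat and t :: "nat \<Rightarrow> real" and P :: "nat \<Rightarrow> nat" and \<beta> :: "nat \<Rightarrow> real"
  assumes s: "s \<ge> 1" and k: "k \<ge> 1"
  and hP: "\<forall>n. s \<le> P n \<and> 0 \<le> t n \<and> t n \<le> 1"
  and heq: "\<forall>n\<ge>2. t n ^ (2 * s) * real (P n) ^ s / fact s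
               = (ln (real n) + (real k - 1) * ln (ln (real n)) + \<beta> n) / real n"
  and hb: "filterlim \<beta> at_top at_top"
  shows "\<exists>(t' :: nat \<Rightarrow> real) (P' :: nat \<Rightarrow> nat) (\<beta>' :: nat \<Rightarrow> real).
         (\<forall>n. s \<le> P' n \<and> 0 \<le> t' n \<and> t' n \<le> 1) \<and>
         (\<forall>n\<ge>2. t' n ^ (2 * s) * real (P' n) ^ s / fact s
                  = (ln (real n) + (real k - 1) * ln (ln (real n)) + \<beta>' n) / real n) \<and>
         filterlim \<beta>' at_top at_top \<and>
         \<beta>' \<in> O(\<lambda>n. ln (ln (real n))) \<and>
         (\<forall>n. coupling_spanning_subgraph
                (binomial_s_intersection_graph s n (t' n) (P' n))
                (binomial_s_intersection_graph s n (t n) (P n)))"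
proof -
  define L where "L n = ln (real n) + (real k - 1) * ln (ln (real n))" for n
  define A where "A n = real (P n) ^ s / fact s" for n
  define y where "y n = (L n + ln (ln (real n))) / real n" for n
  define r where "r n = root (2 * s) (y n / A n)" for n
  define t' where "t' n = min (t n) (max 0 (r n))" for n
  define \<beta>' where "\<beta>' n = real n * (t' n ^ (2 * s) * A n) - L n" for n
  have Apos: "A n > 0" for n
  proof -
    have "P n > 0" using hP s by (metis le_trans not_less not_one_le_zero)
    then show ?thesis by (simp add: A_def)
  qed
  have t'b: "\<forall>n. s \<le> P n \<and> 0 \<le> t' n \<and> t' n \<le> 1" using hP by (auto simp: t'_def min_le_iff_disj)
  have eq: "\<forall>n\<ge>2. t' n ^ (2 * s) * real (P n) ^ s / fact s
                  = (ln (real n) + (real k - 1) * ln (ln (real n)) + \<beta>' n) / real n"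
    by (auto simp: \<beta>'_def L_def A_def)
  have ev2: "eventually (\<lambda>n. 0 \<le> ln (ln (real n))) at_top"
    using lnln_top by (simp add: filterlim_at_top)
  have ev3: "eventually (\<lambda>n. (3::nat) \<le> n) at_top" by (rule eventually_ge_at_top)
  have evb: "eventually (\<lambda>n. \<beta>' n = min (\<beta> n) (ln (ln (real n)))) at_top"
    using ev2 ev3
  proof eventually_elim
    case (elim n)
    have ln1: "ln (real n) \<ge> 0" using elim by simp
    moreover have "0 \<le> (real k - 1) * ln (ln (real n))" using k elim by simp
    ultimately have y0: "0 \<le> y n" unfolding y_def L_def using elim by (intro divide_nonneg_nonneg) auto
    have r0: "0 \<le> r n" using y0 Apos[of n] unfolding r_def by (intro real_root_ge_zero) auto
    have rp: "r n ^ (2 * s) * A n = y n"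
      using root_pow[of "y n / A n" s] y0 Apos[of n] s by (simp add: r_def)
    have tt: "t' n = min (t n) (r n)" using r0 by (simp add: t'_def)
    have xt: "real n * (t n ^ (2 * s) * A n) = L n + \<beta> n"
      using heq elim by (auto simp: A_def L_def)
    have "\<beta>' n = real n * min (t n ^ (2 * s) * A n) (y n) - L n"
      unfolding \<beta>'_def tt using min_pow[of "t n" "r n" "A n" "2 * s"] hP r0 Apos[of n] rp by simp
    also have "\<dots> = min (real n * (t n ^ (2 * s) * A n)) (real n * y n) - L n"
      by (simp add: min_mult_distrib_left)
    also have "real n * y n = L n + ln (ln (real n))" using elim by (simp add: y_def)
    finally show ?case using xt by (simp add: min_diff_distrib_left)
  qed
  have "filterlim \<beta>' at_top at_top"
    unfolding filterlim_at_top
  proof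
    fix Z :: real
    have "eventually (\<lambda>n. Z \<le> \<beta> n) at_top" using hb by (simp add: filterlim_at_top)
    moreover have "eventually (\<lambda>n. Z \<le> ln (ln (real n))) at_top" using lnln_top by (simp add: filterlim_at_top)
    ultimately show "eventually (\<lambda>n. Z \<le> \<beta>' n) at_top" using evb by eventually_elim auto
  qed
  moreover have "\<beta>' \<in> O(\<lambda>n. ln (ln (real n)))"
  proof (rule bigoI[where c=1])
    have "eventually (\<lambda>n. 0 \<le> \<beta> n) at_top" using hb by (simp add: filterlim_at_top)
    then show "eventually (\<lambda>n. norm (\<beta>' n) \<le> 1 * norm (ln (ln (real n)))) at_top"
      using evb ev2 by eventually_elim auto
  qed
  moreover have "\<forall>n. coupling_spanning_subgraph
                (binomial_s_intersection_graph s n (t' n) (P n))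
                (binomial_s_intersection_graph s n (t n) (P n))"
    using hP t'b by (auto intro!: coupling_t simp: t'_def)
  ultimately show ?thesis using t'b eq by (intro exI[of _ t'] exI[of _ P] exI[of _ \<beta>']) blast
qed
theorem lemma6:
  fixes s k :: nat
  assumes s: "s \<ge> 1" and k: "k \<ge> 1"
  shows
  "(\<forall>(t :: nat \<Rightarrow> real) (P :: nat \<Rightarrow> nat) (\<beta> :: nat \<Rightarrow> real).
      (\<forall>n. s \<le> P n \<and> 0 \<le> t n \<and> t n \<le> 1) \<and>
      (\<forall>n\<ge>2. t n ^ (2 * s) * real (P n) ^ s / fact s
               = (ln (real n) + (real k - 1) * ln (ln (real n)) + \<beta> n) / real n) \<and>
      filterlim \<beta> at_bot at_top
      \<longrightarrow>
      (\<exists>(t' :: nat \<Rightarrow> real) (P' :: nat \<Rightarrow> nat) (\<beta>' :: nat \<Rightarrow> real).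
         (\<forall>n. s \<le> P' n \<and> 0 \<le> t' n \<and> t' n \<le> 1) \<and>
         (\<forall>n\<ge>2. t' n ^ (2 * s) * real (P' n) ^ s / fact s
                  = (ln (real n) + (real k - 1) * ln (ln (real n)) + \<beta>' n) / real n) \<and>
         filterlim \<beta>' at_bot at_top \<and>
         (\<lambda>n. - \<beta>' n) \<in> O(\<lambda>n. ln (ln (real n))) \<and>
         (\<forall>n. coupling_spanning_subgraph
                (binomial_s_intersection_graph s n (t n) (P n))
                (binomial_s_intersection_graph s n (t' n) (P' n)))))
   \<and>
   (\<forall>(t :: nat \<Rightarrow> real) (P :: nat \<Rightarrow> nat) (\<beta> :: nat \<Rightarrow> real).
      (\<forall>n. s \<le> P n \<and> 0 \<le> t n \<and> t n \<le> 1) \<and>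
      (\<forall>n\<ge>2. t n ^ (2 * s) * real (P n) ^ s / fact s
               = (ln (real n) + (real k - 1) * ln (ln (real n)) + \<beta> n) / real n) \<and>
      filterlim \<beta> at_top at_top
      \<longrightarrow>
      (\<exists>(t' :: nat \<Rightarrow> real) (P' :: nat \<Rightarrow> nat) (\<beta>' :: nat \<Rightarrow> real).
         (\<forall>n. s \<le> P' n \<and> 0 \<le> t' n \<and> t' n \<le> 1) \<and>
         (\<forall>n\<ge>2. t' n ^ (2 * s) * real (P' n) ^ s / fact s
                  = (ln (real n) + (real k - 1) * ln (ln (real n)) + \<beta>' n) / real n) \<and>
         filterlim \<beta>' at_top at_top \<and>
         \<beta>' \<in> O(\<lambda>n. ln (ln (real n))) \<and>
         (\<forall>n. coupling_spanning_subgraph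
                (binomial_s_intersection_graph s n (t' n) (P' n))
                (binomial_s_intersection_graph s n (t n) (P n)))))"
    apply (intro conjI allI impI)
   apply (elim conjE, rule part_a[OF s k], assumption+)
  apply (elim conjE, rule part_b[OF s k], assumption+)
  done

end
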